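(* For every finite point set $P$ in general position, the graph $G_\bigtriangledown(P)\cap G_\bigtriangleup(P)$ (vertex set $P$, edge set the intersection of the edge sets) is connected.
   Context: A finite point set $P$ in the plane is in general position if no line through two points of $P$ makes an angle of $0^\circ$, $60^\circ$ or $120^\circ$ with the horizontal. A down-triangle (resp. up-triangle) is an equilateral triangle with one side parallel to the $x$-axis and the corner opposite to this side below (resp. above) that side. $G_\bigtriangledown(P)$ (resp. $G_\bigtriangleup(P)$) is the graph with vertex set $P$ in which $p,q$ are adjacent iff some (closed) down-triangle (resp. up-triangle) contains $p$ and $q$ and no other point of $P$. *)

theory Defs
  imports Complex_Main
begin

type_synonym point = "real \<times> real"

text \<open>General position: no line through two distinct points of P has angle
0, 60 or 120 degrees with the horizontal, i.e. slope 0, sqrt 3 or -sqrt 3.\<close>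
definition general_position :: "point set \<Rightarrow> bool" where
  "general_position P \<longleftrightarrow>
     (\<forall>p\<in>P. \<forall>q\<in>P. p \<noteq> q \<longrightarrow>
        snd q - snd p \<noteq> 0 \<and>
        snd q - snd p \<noteq> sqrt 3 * (fst q - fst p) \<and>
        snd q - snd p \<noteq> - sqrt 3 * (fst q - fst p))"

text \<open>Closed down-triangle with bottom apex (ax, ay) and side length s > 0:
horizontal top side at height ay + s*sqrt 3/2.\<close>
definition down_triangle :: "real \<Rightarrow> real \<Rightarrow> real \<Rightarrow> point set" where
  "down_triangle ax ay s =
     {(x, y). ay \<le> y \<and> y \<le> ay + s * sqrt 3 / 2 \<and> \<bar>x - ax\<bar> \<le> (y - ay) / sqrt 3}"

text \<open>Closed up-triangle with top apex (ax, ay) and side length s > 0: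
horizontal bottom side at height ay - s*sqrt 3/2.\<close>
definition up_triangle :: "real \<Rightarrow> real \<Rightarrow> real \<Rightarrow> point set" where
  "up_triangle ax ay s =
     {(x, y). ay - s * sqrt 3 / 2 \<le> y \<and> y \<le> ay \<and> \<bar>x - ax\<bar> \<le> (ay - y) / sqrt 3}"

definition G_down :: "point set \<Rightarrow> point \<Rightarrow> point \<Rightarrow> bool" where
  "G_down P p q \<longleftrightarrow> p \<in> P \<and> q \<in> P \<and> p \<noteq> q \<and>
     (\<exists>ax ay s. s > 0 \<and> down_triangle ax ay s \<inter> P = {p, q})"

definition G_up :: "point set \<Rightarrow> point \<Rightarrow> point \<Rightarrow> bool" where
  "G_up P p q \<longleftrightarrow> p \<in> P \<and> q \<in> P \<and> p \<noteq> q \<and>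
     (\<exists>ax ay s. s > 0 \<and> up_triangle ax ay s \<inter> P = {p, q})"

definition connected_graph :: "'a set \<Rightarrow> ('a \<Rightarrow> 'a \<Rightarrow> bool) \<Rightarrow> bool" where
  "connected_graph V E \<longleftrightarrow>
     (\<forall>u\<in>V. \<forall>v\<in>V. (\<lambda>a b. a \<in> V \<and> b \<in> V \<and> E a b)\<^sup>*\<^sup>* u v)"

end

theory Submission
  imports Defs
begin

lemma key:
  fixes p1 p2 p3 q1 q2 q3 r1 r2 r3 :: real
  assumes "p1+p2+p3=0" "q1+q2+q3=0" "r1+r2+r3=0"
    "q1\<noteq>r1" "q2\<noteq>r2" "q3\<noteq>r3" "p1\<noteq>q1"
    "r1 \<le> max p1 q1" "r2 \<le> max p2 q2" "r3 \<le> max p3 q3"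
  shows "\<bar>p1-r1\<bar>+\<bar>p2-r2\<bar>+\<bar>p3-r3\<bar> < \<bar>p1-q1\<bar>+\<bar>p2-q2\<bar>+\<bar>p3-q3\<bar>"
  using assms by (auto simp: abs_if max_def split: if_splits)

definition G1 :: "point \<Rightarrow> real" where "G1 p = 2 * snd p"
definition G2 :: "point \<Rightarrow> real" where "G2 p = sqrt 3 * fst p - snd p"
definition G3 :: "point \<Rightarrow> real" where "G3 p = - sqrt 3 * fst p - snd p"
definition D :: "point \<Rightarrow> point \<Rightarrow> real" where
  "D p q = \<bar>G1 p - G1 q\<bar> + \<bar>G2 p - G2 q\<bar> + \<bar>G3 p - G3 q\<bar>"

lemma Gsum: "G1 p + G2 p + G3 p = 0"
  by (simp add: G1_def G2_def G3_def)

lemma D_sym: "D p q = D q p"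
  by (simp add: D_def abs_minus_commute)

lemma gp_G:
  assumes "general_position P" "p \<in> P" "q \<in> P" "p \<noteq> q"
  shows "G1 p \<noteq> G1 q" "G2 p \<noteq> G2 q" "G3 p \<noteq> G3 q"
  using assms unfolding general_position_def G1_def G2_def G3_def
  by (auto simp: algebra_simps)

lemma down_mem:
  "(x, y) \<in> down_triangle ax ay s \<longleftrightarrow>
     2*y \<le> 2*ay + s * sqrt 3 \<and> sqrt 3 * x - y \<le> sqrt 3 * ax - ay \<and> - sqrt 3 * x - y \<le> - sqrt 3 * ax - ay"
proof -
  have t: "sqrt 3 > (0::real)" by simp
  have "\<bar>x - ax\<bar> \<le> (y - ay) / sqrt 3 \<longleftrightarrow> sqrt 3 * \<bar>x - ax\<bar> \<le> y - ay"
    using t by (simp add: pos_le_divide_eq mult.commute)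
  also have "\<dots> \<longleftrightarrow> sqrt 3 * x - y \<le> sqrt 3 * ax - ay \<and> - sqrt 3 * x - y \<le> - sqrt 3 * ax - ay"
  proof -
    have "sqrt 3 * \<bar>x - ax\<bar> = \<bar>sqrt 3 * x - sqrt 3 * ax\<bar>"
      unfolding right_diff_distrib[symmetric] abs_mult by simp
    then show ?thesis by (simp only: abs_le_iff) linarith
  qed
  finally show ?thesis unfolding down_triangle_def using t
    by (auto simp: algebra_simps)
qed

lemma up_mem:
  "(x, y) \<in> up_triangle ax ay s \<longleftrightarrow>
     2*y \<ge> 2*ay - s * sqrt 3 \<and> sqrt 3 * x - y \<ge> sqrt 3 * ax - ay \<and> - sqrt 3 * x - y \<ge> - sqrt 3 * ax - ay"
proof -
  have t: "sqrt 3 > (0::real)" by simp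
  have "\<bar>x - ax\<bar> \<le> (ay - y) / sqrt 3 \<longleftrightarrow> sqrt 3 * \<bar>x - ax\<bar> \<le> ay - y"
    using t by (simp add: pos_le_divide_eq mult.commute)
  also have "\<dots> \<longleftrightarrow> sqrt 3 * x - y \<ge> sqrt 3 * ax - ay \<and> - sqrt 3 * x - y \<ge> - sqrt 3 * ax - ay"
  proof -
    have "sqrt 3 * \<bar>x - ax\<bar> = \<bar>sqrt 3 * x - sqrt 3 * ax\<bar>"
      unfolding right_diff_distrib[symmetric] abs_mult by simp
    then show ?thesis by (simp only: abs_le_iff) linarith
  qed
  finally show ?thesis unfolding up_triangle_def using t
    by (auto simp: algebra_simps)
qed

lemma down_char:
  fixes c1 c2 c3 :: real
  assumes "c1 + c2 + c3 > 0"
  shows "\<exists>ax ay s. s > 0 \<and> (\<forall>p. p \<in> down_triangle ax ay s \<longleftrightarrow>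
            G1 p \<le> c1 \<and> G2 p \<le> c2 \<and> G3 p \<le> c3)"
proof -
  define t where "t = sqrt (3::real)"
  have t: "t > 0" "t * t = 3" unfolding t_def by auto
  define ay where "ay = -(c2+c3)/2"
  define ax where "ax = (c2-c3)/(2*t)"
  define s where "s = (c1+c2+c3)/t"
  have "s > 0" using t assms by (simp add: s_def)
  moreover have "\<forall>p. p \<in> down_triangle ax ay s \<longleftrightarrow> G1 p \<le> c1 \<and> G2 p \<le> c2 \<and> G3 p \<le> c3"
  proof
    fix p :: point
    obtain x y where p: "p = (x,y)" by (cases p)
    have e1: "2*ay + s * t = c1" using t by (simp add: ay_def s_def field_simps)
    have e2: "t * ax - ay = c2" using t by (simp add: ay_def ax_def field_simps)
    have e3: "- t * ax - ay = c3" using t by (simp add: ay_def ax_def field_simps)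
    show "p \<in> down_triangle ax ay s \<longleftrightarrow> G1 p \<le> c1 \<and> G2 p \<le> c2 \<and> G3 p \<le> c3"
      unfolding p down_mem G1_def G2_def G3_def using e1 e2 e3 by (simp add: t_def)
  qed
  ultimately show ?thesis by blast
qed

lemma up_char:
  fixes c1 c2 c3 :: real
  assumes "c1 + c2 + c3 < 0"
  shows "\<exists>ax ay s. s > 0 \<and> (\<forall>p. p \<in> up_triangle ax ay s \<longleftrightarrow>
            G1 p \<ge> c1 \<and> G2 p \<ge> c2 \<and> G3 p \<ge> c3)"
proof -
  define t where "t = sqrt (3::real)"
  have t: "t > 0" "t * t = 3" unfolding t_def by auto
  define ay where "ay = -(c2+c3)/2"
  define ax where "ax = (c2-c3)/(2*t)"
  define s where "s = -(c1+c2+c3)/t"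
  have "s > 0" using t assms by (simp add: s_def)
  moreover have "\<forall>p. p \<in> up_triangle ax ay s \<longleftrightarrow> G1 p \<ge> c1 \<and> G2 p \<ge> c2 \<and> G3 p \<ge> c3"
  proof
    fix p :: point
    obtain x y where p: "p = (x,y)" by (cases p)
    have e1: "2*ay - s * t = c1" using t by (simp add: ay_def s_def field_simps)
    have e2: "t * ax - ay = c2" using t by (simp add: ay_def ax_def field_simps)
    have e3: "- t * ax - ay = c3" using t by (simp add: ay_def ax_def field_simps)
    show "p \<in> up_triangle ax ay s \<longleftrightarrow> G1 p \<ge> c1 \<and> G2 p \<ge> c2 \<and> G3 p \<ge> c3"
      unfolding p up_mem G1_def G2_def G3_def using e1 e2 e3 by (simp add: t_def)
  qed
  ultimately show ?thesis by blast
qed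

lemma key_down:
  assumes "general_position P" "p \<in> P" "q \<in> P" "r \<in> P" "p \<noteq> q" "r \<noteq> q"
    "G1 r \<le> max (G1 p) (G1 q)" "G2 r \<le> max (G2 p) (G2 q)" "G3 r \<le> max (G3 p) (G3 q)"
  shows "D p r < D p q"
  unfolding D_def
  by (rule key[OF Gsum Gsum Gsum]) (use assms gp_G[of P] in auto)

lemma key_up:
  assumes "general_position P" "p \<in> P" "q \<in> P" "r \<in> P" "p \<noteq> q" "r \<noteq> q"
    "G1 r \<ge> min (G1 p) (G1 q)" "G2 r \<ge> min (G2 p) (G2 q)" "G3 r \<ge> min (G3 p) (G3 q)"
  shows "D p r < D p q"
proof -
  have "\<bar>(-G1 p)-(-G1 r)\<bar>+\<bar>(-G2 p)-(-G2 r)\<bar>+\<bar>(-G3 p)-(-G3 r)\<bar>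
      < \<bar>(-G1 p)-(-G1 q)\<bar>+\<bar>(-G2 p)-(-G2 q)\<bar>+\<bar>(-G3 p)-(-G3 q)\<bar>"
    by (rule key) (use assms gp_G[of P] Gsum[of p] Gsum[of q] Gsum[of r] in auto)
  then show ?thesis unfolding D_def by (simp add: abs_minus_commute)
qed

lemma step_down:
  assumes "general_position P" "p \<in> P" "q \<in> P" "p \<noteq> q"
  shows "G_down P p q \<or> (\<exists>r\<in>P. r \<noteq> p \<and> r \<noteq> q \<and> D p r < D p q \<and> D q r < D p q)"
proof -
  have ne: "G1 p \<noteq> G1 q" using gp_G[OF assms] by auto
  have "max (G1 p) (G1 q) + max (G2 p) (G2 q) + max (G3 p) (G3 q) > 0"
    using ne Gsum[of p] Gsum[of q] by (auto simp: max_def)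
  from down_char[OF this] obtain ax ay s where s: "s > 0" and
    T: "\<And>x. x \<in> down_triangle ax ay s \<longleftrightarrow> G1 x \<le> max (G1 p) (G1 q) \<and>
        G2 x \<le> max (G2 p) (G2 q) \<and> G3 x \<le> max (G3 p) (G3 q)" by blast
  show ?thesis
  proof (cases "down_triangle ax ay s \<inter> P = {p, q}")
    case True
    then show ?thesis using s assms unfolding G_down_def by blast
  next
    case False
    have "p \<in> down_triangle ax ay s" "q \<in> down_triangle ax ay s" using T by auto
    with False assms obtain r where r: "r \<in> P" "r \<in> down_triangle ax ay s" "r \<noteq> p" "r \<noteq> q"
      by blast
    have "D p r < D p q" using key_down[OF assms(1,2,3) r(1) assms(4) r(4)] T[of r] r(2) by auto
    moreover have "D q r < D q p"
      using key_down[OF assms(1,3,2) r(1) assms(4)[symmetric] r(3)] T[of r] r(2)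
      by (auto simp: max.commute)
    ultimately show ?thesis using r D_sym[of q p] by auto
  qed
qed

lemma step_up:
  assumes "general_position P" "p \<in> P" "q \<in> P" "p \<noteq> q"
  shows "G_up P p q \<or> (\<exists>r\<in>P. r \<noteq> p \<and> r \<noteq> q \<and> D p r < D p q \<and> D q r < D p q)"
proof -
  have ne: "G1 p \<noteq> G1 q" using gp_G[OF assms] by auto
  have "min (G1 p) (G1 q) + min (G2 p) (G2 q) + min (G3 p) (G3 q) < 0"
    using ne Gsum[of p] Gsum[of q] by (auto simp: min_def)
  from up_char[OF this] obtain ax ay s where s: "s > 0" and
    T: "\<And>x. x \<in> up_triangle ax ay s \<longleftrightarrow> G1 x \<ge> min (G1 p) (G1 q) \<and>
        G2 x \<ge> min (G2 p) (G2 q) \<and> G3 x \<ge> min (G3 p) (G3 q)" by blast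
  show ?thesis
  proof (cases "up_triangle ax ay s \<inter> P = {p, q}")
    case True
    then show ?thesis using s assms unfolding G_up_def by blast
  next
    case False
    have "p \<in> up_triangle ax ay s" "q \<in> up_triangle ax ay s" using T by auto
    with False assms obtain r where r: "r \<in> P" "r \<in> up_triangle ax ay s" "r \<noteq> p" "r \<noteq> q"
      by blast
    have "D p r < D p q" using key_up[OF assms(1,2,3) r(1) assms(4) r(4)] T[of r] r(2) by auto
    moreover have "D q r < D q p"
      using key_up[OF assms(1,3,2) r(1) assms(4)[symmetric] r(3)] T[of r] r(2)
      by (auto simp: min.commute)
    ultimately show ?thesis using r D_sym[of q p] by auto
  qed
qed

theorem lemma8:
  fixes P :: "point set"
  assumes "finite P" and "general_position P"
  shows "connected_graph P (\<lambda>p q. G_down P p q \<and> G_up P p q)"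
proof -
  define E where "E = (\<lambda>a b. a \<in> P \<and> b \<in> P \<and> (G_down P a b \<and> G_up P a b))"
  define S where "S = (\<lambda>p q. {(a, b) \<in> P \<times> P. D a b < D p q})"
  have fin: "finite (S p q)" for p q unfolding S_def
    by (rule finite_subset[of _ "P \<times> P"]) (use assms(1) in auto)
  have main: "\<forall>p q. card (S p q) = n \<longrightarrow> p \<in> P \<longrightarrow> q \<in> P \<longrightarrow> E\<^sup>*\<^sup>* p q" for n
  proof (induction n rule: less_induct)
    case (less n)
    show ?case
    proof (intro allI impI)
      fix p q assume c: "card (S p q) = n" and pq: "p \<in> P" "q \<in> P"
      show "E\<^sup>*\<^sup>* p q"
      proof (cases "p = q")
        case True then show ?thesis by simp
      next
        case False
        show ?thesis
        proof (cases "G_down P p q \<and> G_up P p q")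
          case True
          then show ?thesis using pq unfolding E_def by (simp add: r_into_rtranclp)
        next
          case nE: False
          then obtain r where r: "r \<in> P" "D p r < D p q" "D q r < D p q"
            using step_down[OF assms(2) pq False] step_up[OF assms(2) pq False] by blast
          have lt: "card (S a b) < n" if "a \<in> P" "b \<in> P" "D a b < D p q" for a b
          proof -
            have "S a b \<subset> S p q" unfolding S_def using that by auto
            then show ?thesis using c fin psubset_card_mono by blast
          qed
          have "E\<^sup>*\<^sup>* p r" using less.IH[OF lt[OF pq(1) r(1,2)]] pq r by blast
          moreover have "E\<^sup>*\<^sup>* r q"
            using less.IH[OF lt[OF r(1) pq(2)]] pq r D_sym[of q r] by (metis less_eq_real_def)
          ultimately show ?thesis by (rule rtranclp_trans)
        qed
      qed
    qed
  qed
  show ?thesis unfolding connected_graph_def using main E_def by blast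
qed

end
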